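(* Let $b\ge2$ be an integer and let $(q,q_1;q',q_1')$ be one of the fifteen quadruples $(3,1;3,1)$, $(3,1;3,2)$, $(3,2;3,2)$, $(3,2;4,3)$, $(3,1;4,3)$, $(3,2;4,1)$, $(3,1;4,1)$, $(3,2;5,4)$, $(3,2;5,3)$, $(3,1;5,4)$, $(3,2;5,2)$, $(3,1;5,3)$, $(3,2;5,1)$, $(3,1;5,2)$, $(3,1;5,1)$. Consider the configuration $\langle b;q,q_1;q',q_1'\rangle$ of smooth rational curves: a central curve $E_0$ with $E_0^2=-b$; a curve $E_1$ with $E_1^2=-2$; a chain $E_2,\dots,E_k$ with $E_i^2=-n_i$ where $[n_2,\dots,n_k]=q/q_1$; and a chain $E_{k+1},\dots,E_l$ with $E_i^2=-n_i$ where $[n_{k+1},\dots,n_l]=q'/q_1'$; $E_0$ meets each of $E_1,E_2,E_{k+1}$ transversally once, consecutive curves in each chain meet once, and there are no other intersections. Let $a_0,\dots,a_l$ be the discrepancies, i.e. the unique solution of $\sum_ja_jE_j\cdot E_i=2+E_i^2$ for all $i$. If not all $a_i$ are $0$ (i.e. the corresponding log terminal singularity of type $T_m$, $O_m$, or $I_m$ is not canonical), then $a_0+a_1\ge1$.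
   Context: $[m_1,\dots,m_r]$ denotes the Hirzebruch–Jung continued fraction $m_1-1/(m_2-1/(\cdots-1/m_r))$ with $m_i\ge2$; explicitly $3/1=[3]$, $3/2=[2,2]$, $4/3=[2,2,2]$, $4/1=[4]$, $5/4=[2,2,2,2]$, $5/3=[2,3]$, $5/2=[3,2]$, $5/1=[5]$. These configurations are exactly the minimal resolution graphs of log terminal singularities of types $T_m$ (first three quadruples), $O_m$ (next four) and $I_m$ (last eight). *)

theory Defs
  imports Complex_Main
begin

fun hjcf :: "nat list \<Rightarrow> real" where
  "hjcf [] = 0"
| "hjcf [m] = real m"
| "hjcf (m # ms) = real m - 1 / hjcf ms"

definition is_hj :: "nat list \<Rightarrow> nat \<Rightarrow> nat \<Rightarrow> bool" where
  "is_hj ns q q1 \<longleftrightarrow> ns \<noteq> [] \<and> (\<forall>m\<in>set ns. m \<ge> 2) \<and> hjcf ns = real q / real q1"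

text \<open>Configuration <b; ns1; ns2>: curves indexed 0..l, with E_0 central, E_1 the (-2)-curve,
  E_2..E_k the first chain (k = length ns1 + 1), E_(k+1)..E_l the second chain.\<close>
definition conf_k :: "nat list \<Rightarrow> nat" where "conf_k ns1 = length ns1 + 1"
definition conf_l :: "nat list \<Rightarrow> nat list \<Rightarrow> nat" where
  "conf_l ns1 ns2 = length ns1 + 1 + length ns2"

definition conf_adj :: "nat list \<Rightarrow> nat list \<Rightarrow> nat \<Rightarrow> nat \<Rightarrow> bool" where
  "conf_adj ns1 ns2 i j \<longleftrightarrow>
     (let k = conf_k ns1; l = conf_l ns1 ns2;
          e = (\<lambda>x y. (x = 0 \<and> (y = 1 \<or> y = 2 \<or> y = k + 1))
                    \<or> (2 \<le> x \<and> x < k \<and> y = x + 1)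
                    \<or> (k + 1 \<le> x \<and> x < l \<and> y = x + 1))
      in e i j \<or> e j i)"

definition conf_self :: "nat \<Rightarrow> nat list \<Rightarrow> nat list \<Rightarrow> nat \<Rightarrow> int" where
  "conf_self b ns1 ns2 i =
     (let k = conf_k ns1 in
      if i = 0 then - int b
      else if i = 1 then -2
      else if i \<le> k then - int (ns1 ! (i - 2))
      else - int (ns2 ! (i - k - 1)))"

definition conf_mat :: "nat \<Rightarrow> nat list \<Rightarrow> nat list \<Rightarrow> nat \<Rightarrow> nat \<Rightarrow> int" where
  "conf_mat b ns1 ns2 i j =
     (if i = j then conf_self b ns1 ns2 i
      else if conf_adj ns1 ns2 i j then 1 else 0)"

definition quads :: "(nat \<times> nat \<times> nat \<times> nat) set" where
  "quads = {(3,1,3,1), (3,1,3,2), (3,2,3,2), (3,2,4,3), (3,1,4,3), (3,2,4,1), (3,1,4,1),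
            (3,2,5,4), (3,2,5,3), (3,1,5,4), (3,2,5,2), (3,1,5,3), (3,2,5,1), (3,1,5,2),
            (3,1,5,1)}"

end

theory Submission
  imports Defs
begin

lemma all_le_Suc: "(\<forall>i\<le>Suc n. P i) \<longleftrightarrow> (\<forall>i\<le>n. P i) \<and> P (Suc n)"
  by (auto simp: le_Suc_eq)
lemma ex_le_Suc: "(\<exists>i\<le>Suc n. P i) \<longleftrightarrow> (\<exists>i\<le>n. P i) \<or> P (Suc n)"
  by (auto simp: le_Suc_eq)

lemma prod_eq_aux: "(2/3 - x) * (real b - 3) = 2/3*real b - 2 - x * real b + 3 * (x::real)"
  by (simp add: algebra_simps divide_simps)

lemma prod_nonneg_aux: "\<not> (x \<ge> 2/3 \<or> b \<le> 2) \<Longrightarrow> 0 \<le> (2/3 - x) * (real b - 3)"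
  by (rule mult_nonneg_nonneg) auto

lemma prodfact:
  fixes x :: real and b :: nat
  shows "x \<ge> 2/3 \<or> b \<le> 2 \<or> 0 \<le> 2/3*real b - 2 - x * real b + 3 * x"
  using prod_nonneg_aux[of x b] prod_eq_aux[of x b] by linarith

lemma inv_aux: "(1::real) < h \<Longrightarrow> 1 / h < 1 \<and> 0 < 1 / h"
  by simp

lemma step_aux: "(1::real) < h \<Longrightarrow> 2 \<le> m \<Longrightarrow> 1 < real m - 1/h"
  apply (drule inv_aux)
  by linarith

lemma hj_gt1: "ns \<noteq> [] \<Longrightarrow> \<forall>m\<in>set ns. m \<ge> 2 \<Longrightarrow> hjcf ns > 1"
  apply (induction ns rule: hjcf.induct)
    apply simp
   apply simp
  apply (simp only: hjcf.simps)
  apply (rule step_aux)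
   apply simp
  apply simp
  done

lemma hj_bounds:
  "ms \<noteq> [] \<Longrightarrow> \<forall>x\<in>set ms. x \<ge> 2 \<Longrightarrow> real m - 1 < hjcf (m # ms) \<and> hjcf (m # ms) < real m"
  apply (cases ms)
   apply simp
  apply (frule (1) hj_gt1)
  apply (drule inv_aux)
  apply simp
  done

lemma nat_between: "real y - 1 < real x \<Longrightarrow> real x < real y \<Longrightarrow> False"
  apply (subgoal_tac "real y < real (Suc x)")
   apply (simp only: of_nat_less_iff)
   apply linarith
  done

lemma nat_heads: "real x - 1 < v \<Longrightarrow> v < real x \<Longrightarrow> real y - 1 < (v::real) \<Longrightarrow> v < real y \<Longrightarrow> x = y"
  apply (subgoal_tac "real y < real (Suc x) \<and> real x < real (Suc y)")
   apply (simp only: of_nat_less_iff)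
   apply linarith
  done

lemma single_long: "yr \<noteq> [] \<Longrightarrow> \<forall>z\<in>set yr. z \<ge> 2 \<Longrightarrow> hjcf [x] \<noteq> hjcf (y # yr)"
  apply (drule (1) hj_bounds[where m=y])
  apply (simp only: hjcf.simps)
  apply (metis nat_between)
  done

lemma long_long: "xr \<noteq> [] \<Longrightarrow> \<forall>z\<in>set xr. z \<ge> 2 \<Longrightarrow> yr \<noteq> [] \<Longrightarrow> \<forall>z\<in>set yr. z \<ge> 2
  \<Longrightarrow> hjcf (x # xr) = hjcf (y # yr) \<Longrightarrow> x = y \<and> hjcf xr = hjcf yr"
  apply (frule (1) hj_bounds[where m=x and ms=xr])
  apply (frule (1) hj_bounds[where m=y and ms=yr])
  apply (subgoal_tac "x = y")
   apply (cases xr; cases yr)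
      apply simp_all
  done

lemma hj_inj:
  "xs \<noteq> [] \<Longrightarrow> \<forall>x\<in>set xs. x \<ge> 2 \<Longrightarrow> ys \<noteq> [] \<Longrightarrow> \<forall>y\<in>set ys. y \<ge> 2
   \<Longrightarrow> hjcf xs = hjcf ys \<Longrightarrow> xs = ys"
  apply (induction xs arbitrary: ys)
   apply simp
  apply (case_tac ys)
   apply simp
  apply (case_tac xs; case_tac list)
     apply simp
    apply (metis list.distinct(1) single_long list.set_intros(2))
   apply (metis list.distinct(1) single_long list.set_intros(2))
  apply (metis list.distinct(1) long_long list.set_intros(2))
  done

lemma hj_eq: "is_hj ns q q1 \<Longrightarrow> hjcf L = real q / real q1 \<Longrightarrow> L \<noteq> [] \<Longrightarrow> \<forall>m\<in>set L. m \<ge> 2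
  \<Longrightarrow> ns = L"
  unfolding is_hj_def using hj_inj by metis


lemma L31: "is_hj ns 3 1 \<Longrightarrow> ns = [3]"
  by (erule hj_eq) auto

lemma L32: "is_hj ns 3 2 \<Longrightarrow> ns = [2,2]"
  by (erule hj_eq) auto

lemma L43: "is_hj ns 4 3 \<Longrightarrow> ns = [2,2,2]"
  by (erule hj_eq) auto

lemma L41: "is_hj ns 4 1 \<Longrightarrow> ns = [4]"
  by (erule hj_eq) auto

lemma L54: "is_hj ns 5 4 \<Longrightarrow> ns = [2,2,2,2]"
  by (erule hj_eq) auto

lemma L53: "is_hj ns 5 3 \<Longrightarrow> ns = [2,3]"
  by (erule hj_eq) auto

lemma L52: "is_hj ns 5 2 \<Longrightarrow> ns = [3,2]"
  by (erule hj_eq) auto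

lemma L51: "is_hj ns 5 1 \<Longrightarrow> ns = [5]"
  by (erule hj_eq) auto

lemma quads_cases: "(q,q1,q',q1') \<in> quads \<Longrightarrow> P 3 1 3 1 \<Longrightarrow> P 3 1 3 2 \<Longrightarrow> P 3 2 3 2 \<Longrightarrow> P 3 2 4 3 \<Longrightarrow> P 3 1 4 3 \<Longrightarrow> P 3 2 4 1 \<Longrightarrow> P 3 1 4 1 \<Longrightarrow> P 3 2 5 4 \<Longrightarrow> P 3 2 5 3 \<Longrightarrow> P 3 1 5 4 \<Longrightarrow> P 3 2 5 2 \<Longrightarrow> P 3 1 5 3 \<Longrightarrow> P 3 2 5 1 \<Longrightarrow> P 3 1 5 2 \<Longrightarrow> P 3 1 5 1 \<Longrightarrow> P q q1 q' q1'"
  by (auto simp: quads_def)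

theorem proposition4p8:
  fixes b q q1 q' q1' :: nat and ns1 ns2 :: "nat list" and a :: "nat \<Rightarrow> real"
  assumes "b \<ge> 2"
    and "(q, q1, q', q1') \<in> quads"
    and "is_hj ns1 q q1" and "is_hj ns2 q' q1'"
    and "\<forall>i \<le> conf_l ns1 ns2.
           (\<Sum>j \<le> conf_l ns1 ns2. a j * real_of_int (conf_mat b ns1 ns2 j i))
             = 2 + real_of_int (conf_mat b ns1 ns2 i i)"
    and "\<exists>i \<le> conf_l ns1 ns2. a i \<noteq> 0"
  shows "a 0 + a 1 \<ge> 1"
  apply (rule mp[OF mp[OF _ assms(3)] assms(4)])
  apply (rule quads_cases[OF assms(2), where P="\<lambda>q q1 q' q1'. is_hj ns1 q q1 \<longrightarrow> is_hj ns2 q' q1' \<longrightarrow> 1 \<le> a 0 + a 1"])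
  apply (insert assms(1,5,6))
   apply (intro impI)
   apply (drule L31, drule L31)
   apply (simp add: conf_l_def conf_mat_def conf_adj_def conf_self_def conf_k_def Let_def
     eval_nat_numeral all_le_Suc ex_le_Suc)
   apply (elim conjE)
   apply (cut_tac x="a 0" and b=b in prodfact)
   apply (cases "b = 2")
    apply (simp; linarith)
   apply (elim disjE; linarith)
   apply (intro impI)
   apply (drule L31, drule L32)
   apply (simp add: conf_l_def conf_mat_def conf_adj_def conf_self_def conf_k_def Let_def
     eval_nat_numeral all_le_Suc ex_le_Suc)
   apply (elim conjE)
   apply (cut_tac x="a 0" and b=b in prodfact)
   apply (cases "b = 2")
    apply (simp; linarith)
   apply (elim disjE; linarith)
   apply (intro impI)
   apply (drule L32, drule L32)
   apply (simp add: conf_l_def conf_mat_def conf_adj_def conf_self_def conf_k_def Let_def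
     eval_nat_numeral all_le_Suc ex_le_Suc)
   apply (elim conjE)
   apply (cut_tac x="a 0" and b=b in prodfact)
   apply (cases "b = 2")
    apply (simp; linarith)
   apply (elim disjE; linarith)
   apply (intro impI)
   apply (drule L32, drule L43)
   apply (simp add: conf_l_def conf_mat_def conf_adj_def conf_self_def conf_k_def Let_def
     eval_nat_numeral all_le_Suc ex_le_Suc)
   apply (elim conjE)
   apply (cut_tac x="a 0" and b=b in prodfact)
   apply (cases "b = 2")
    apply (simp; linarith)
   apply (elim disjE; linarith)
   apply (intro impI)
   apply (drule L31, drule L43)
   apply (simp add: conf_l_def conf_mat_def conf_adj_def conf_self_def conf_k_def Let_def
     eval_nat_numeral all_le_Suc ex_le_Suc)
   apply (elim conjE)
   apply (cut_tac x="a 0" and b=b in prodfact)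
   apply (cases "b = 2")
    apply (simp; linarith)
   apply (elim disjE; linarith)
   apply (intro impI)
   apply (drule L32, drule L41)
   apply (simp add: conf_l_def conf_mat_def conf_adj_def conf_self_def conf_k_def Let_def
     eval_nat_numeral all_le_Suc ex_le_Suc)
   apply (elim conjE)
   apply (cut_tac x="a 0" and b=b in prodfact)
   apply (cases "b = 2")
    apply (simp; linarith)
   apply (elim disjE; linarith)
   apply (intro impI)
   apply (drule L31, drule L41)
   apply (simp add: conf_l_def conf_mat_def conf_adj_def conf_self_def conf_k_def Let_def
     eval_nat_numeral all_le_Suc ex_le_Suc)
   apply (elim conjE)
   apply (cut_tac x="a 0" and b=b in prodfact)
   apply (cases "b = 2")
    apply (simp; linarith)
   apply (elim disjE; linarith)
   apply (intro impI)
   apply (drule L32, drule L54)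
   apply (simp add: conf_l_def conf_mat_def conf_adj_def conf_self_def conf_k_def Let_def
     eval_nat_numeral all_le_Suc ex_le_Suc)
   apply (elim conjE)
   apply (cut_tac x="a 0" and b=b in prodfact)
   apply (cases "b = 2")
    apply (simp; linarith)
   apply (elim disjE; linarith)
   apply (intro impI)
   apply (drule L32, drule L53)
   apply (simp add: conf_l_def conf_mat_def conf_adj_def conf_self_def conf_k_def Let_def
     eval_nat_numeral all_le_Suc ex_le_Suc)
   apply (elim conjE)
   apply (cut_tac x="a 0" and b=b in prodfact)
   apply (cases "b = 2")
    apply (simp; linarith)
   apply (elim disjE; linarith)
   apply (intro impI)
   apply (drule L31, drule L54)
   apply (simp add: conf_l_def conf_mat_def conf_adj_def conf_self_def conf_k_def Let_def
     eval_nat_numeral all_le_Suc ex_le_Suc)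
   apply (elim conjE)
   apply (cut_tac x="a 0" and b=b in prodfact)
   apply (cases "b = 2")
    apply (simp; linarith)
   apply (elim disjE; linarith)
   apply (intro impI)
   apply (drule L32, drule L52)
   apply (simp add: conf_l_def conf_mat_def conf_adj_def conf_self_def conf_k_def Let_def
     eval_nat_numeral all_le_Suc ex_le_Suc)
   apply (elim conjE)
   apply (cut_tac x="a 0" and b=b in prodfact)
   apply (cases "b = 2")
    apply (simp; linarith)
   apply (elim disjE; linarith)
   apply (intro impI)
   apply (drule L31, drule L53)
   apply (simp add: conf_l_def conf_mat_def conf_adj_def conf_self_def conf_k_def Let_def
     eval_nat_numeral all_le_Suc ex_le_Suc)
   apply (elim conjE)
   apply (cut_tac x="a 0" and b=b in prodfact)
   apply (cases "b = 2")
    apply (simp; linarith)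
   apply (elim disjE; linarith)
   apply (intro impI)
   apply (drule L32, drule L51)
   apply (simp add: conf_l_def conf_mat_def conf_adj_def conf_self_def conf_k_def Let_def
     eval_nat_numeral all_le_Suc ex_le_Suc)
   apply (elim conjE)
   apply (cut_tac x="a 0" and b=b in prodfact)
   apply (cases "b = 2")
    apply (simp; linarith)
   apply (elim disjE; linarith)
   apply (intro impI)
   apply (drule L31, drule L52)
   apply (simp add: conf_l_def conf_mat_def conf_adj_def conf_self_def conf_k_def Let_def
     eval_nat_numeral all_le_Suc ex_le_Suc)
   apply (elim conjE)
   apply (cut_tac x="a 0" and b=b in prodfact)
   apply (cases "b = 2")
    apply (simp; linarith)
   apply (elim disjE; linarith)
   apply (intro impI)
   apply (drule L31, drule L51)
   apply (simp add: conf_l_def conf_mat_def conf_adj_def conf_self_def conf_k_def Let_def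
     eval_nat_numeral all_le_Suc ex_le_Suc)
   apply (elim conjE)
   apply (cut_tac x="a 0" and b=b in prodfact)
   apply (cases "b = 2")
    apply (simp; linarith)
   apply (elim disjE; linarith)
  done

end
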